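(* Let $K$ be a positive integer dividing $T$ and let $\epsilon,\delta,\alpha>0$. Consider the sequence $\{\widetilde{\mathbf y}_{m}\}$ produced by Algorithm DPP (described in the context) with these parameters. Fix an interval $[s,e]$, $1\le s<e\le T$, and suppose $\widehat{\mathcal K}_{s,e}:=\{\mathbf x\in\mathcal K:\ g_t(\mathbf x)\le0\ \forall t\in[s,e]\}\neq\emptyset$. Then $$\sum_{t=s}^{e}f_t(\widetilde{\mathbf y}_{m(t)})-\min_{\mathbf x\in\widehat{\mathcal K}_{s,e}}\sum_{t=s}^{e}f_t(\mathbf x)\le 2KR(2G_f+R\alpha)+\frac{G_f^2}{2\alpha}T,$$ and for every $c>0$, $$\sum_{t=s}^{e}g_t^+(\widetilde{\mathbf y}_{m(t)})\le\frac{G_g^2}{2c}T+2cR\Big(\frac{G_fT}{\alpha}+RK\Big)+\frac{2\alpha R^2}{\delta}+\Big(\frac{G_f}{\alpha}+4R\Big)\frac{G_fT}{2\delta K}+4KRG_g.$$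
   Context: Let $\mathcal K\subset\mathbb R^n$ be convex and compact with $\mathbf 0\in\mathcal K\subseteq R\mathcal B$, where $\mathcal B$ is the closed origin-centered unit Euclidean ball and $R>0$. There are $T$ rounds with an arbitrary sequence of functions $f_1,\dots,f_T,g_1,\dots,g_T:\mathbb R^n\to\mathbb R$, each convex on $R\mathcal B$, such that every subgradient of every $f_t$ (resp. $g_t$) at points of $R\mathcal B$ has Euclidean norm at most $G_f$ (resp. $G_g$). Write $g_t^+(\mathbf x)=\max\{g_t(\mathbf x),0\}$. At the end of round $t$ the functions $f_t,g_t$ are revealed to the algorithm. For a block size $K$ (a positive integer dividing $T$) let $m(t)=\lceil t/K\rceil$ and $\mathcal T_m=\{(m-1)K+1,\dots,mK\}$ for $m\in[T/K]$. Linear optimization oracle (LOO) of a convex compact set $S$: given $\mathbf c\in\mathbb R^n$, returns some point of $\arg\min_{\mathbf x\in S}\mathbf c^\top\mathbf x$. Procedure FW$(\mathbf x_1,\mathbf y,\epsilon;S)$ with $\mathbf x_1\in S$: for $i=1,2,\dots$: call the LOO of $S$ to get $\mathbf v_i\in\arg\min_{\mathbf x\in S}(\mathbf x_i-\mathbf y)^\top\mathbf x$; if $(\mathbf x_i-\mathbf y)^\top(\mathbf x_i-\mathbf v_i)\le\epsilon$ or $\|\mathbf x_i-\mathbf y\|^2\le 3\epsilon$, return $\mathbf x_i$; otherwise let $\sigma_i\in\arg\min_{\sigma\in[0,1]}\|\mathbf y-\mathbf x_i-\sigma(\mathbf v_i-\mathbf x_i)\|^2$ and $\mathbf x_{i+1}=\mathbf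 x_i+\sigma_i(\mathbf v_i-\mathbf x_i)$. Procedure $\mathcal O_{AFP}(\mathbf y_1,\mathbf x_0,\epsilon,S)$ with $\mathbf x_0\in S$: if $\|\mathbf x_0-\mathbf y_1\|^2\le3\epsilon$ return $(\mathbf x_0,\mathbf y_1)$. Otherwise for $i=1,2,\dots$: $\mathbf x_i=$FW$(\mathbf x_{i-1},\mathbf y_i,\epsilon;S)$; if $\|\mathbf x_i-\mathbf y_i\|^2>3\epsilon$ set $\mathbf y_{i+1}=\mathbf y_i-\frac23(\mathbf y_i-\mathbf x_i)$, else return $(\mathbf x_i,\mathbf y_i)$. Algorithm DPP (parameters $T,K,\epsilon,\delta,\alpha>0$): set $\mathbf x_1=\widetilde{\mathbf y}_1$ to an arbitrary point of $\mathcal K$. For $m=1,\dots,T/K$: for each $t\in\mathcal T_m$, play $\mathbf x_m$, observe $f_t,g_t$, and pick $\nabla_t\in\partial f_t(\widetilde{\mathbf y}_m)$. Then set $\bar\nabla_m=\frac1K\sum_{t\in\mathcal T_m}\nabla_t$, $G_m^+(\mathbf x)=\delta\sum_{t\in\mathcal T_m}g_t^+(\mathbf x)$, $\mathbf y_{m+1}=\arg\min_{\mathbf x\in R\mathcal B}\{h_m(\mathbf x):=\bar\nabla_m^\top(\mathbf x-\widetilde{\mathbf y}_m)+G_m^+(\mathbf x)+\frac\alpha2\|\mathbf x-\widetilde{\mathbf y}_m\|^2\}$, and $(\mathbf x_{m+1},\widetilde{\mathbf y}_{m+1})=\mathcal O_{AFP}(\mathbf y_{m+1},\mathbf x_m,\epsilon,\mathcal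 K)$. On round $t$ the played point is $\mathbf x_{m(t)}$. *)

theory Defs
  imports "HOL-Analysis.Analysis"
begin

definition subgradients :: "('a::real_inner \<Rightarrow> real) \<Rightarrow> 'a \<Rightarrow> 'a set" where
  "subgradients f x = {g. \<forall>y. f y \<ge> f x + inner g (y - x)}"

definition blk :: "nat \<Rightarrow> nat \<Rightarrow> nat" where
  "blk K t = nat \<lceil>real t / real K\<rceil>"

definition block :: "nat \<Rightarrow> nat \<Rightarrow> nat set" where
  "block K m = {(m - 1) * K + 1 .. m * K}"

definition loo :: "'a::real_inner set \<Rightarrow> 'a \<Rightarrow> 'a \<Rightarrow> bool" where
  "loo S c v \<longleftrightarrow> is_arg_min (\<lambda>z. inner c z) (\<lambda>z. z \<in> S) v"

text \<open>fw_ret S eps y x xo: the procedure FW(x, y, eps; S), started at x, can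
  terminate and return xo (for some admissible choice of LOO answers / line search).\<close>
inductive fw_ret :: "'a::real_inner set \<Rightarrow> real \<Rightarrow> 'a \<Rightarrow> 'a \<Rightarrow> 'a \<Rightarrow> bool"
  for S eps y where
  stop: "\<lbrakk> loo S (x - y) v;
           inner (x - y) (x - v) \<le> eps \<or> (norm (x - y))\<^sup>2 \<le> 3 * eps \<rbrakk>
         \<Longrightarrow> fw_ret S eps y x x"
| step: "\<lbrakk> loo S (x - y) v;
           \<not> (inner (x - y) (x - v) \<le> eps \<or> (norm (x - y))\<^sup>2 \<le> 3 * eps);
           is_arg_min (\<lambda>\<sigma>. (norm (y - x - \<sigma> *\<^sub>R (v - x)))\<^sup>2) (\<lambda>\<sigma>. \<sigma> \<in> {0..1}) \<sigma>;
           fw_ret S eps y (x + \<sigma> *\<^sub>R (v - x)) xo \<rbrakk>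
         \<Longrightarrow> fw_ret S eps y x xo"

text \<open>Main loop of O_AFP: afp_loop S eps y_i x_{i-1} xo yo.\<close>
inductive afp_loop :: "'a::real_inner set \<Rightarrow> real \<Rightarrow> 'a \<Rightarrow> 'a \<Rightarrow> 'a \<Rightarrow> 'a \<Rightarrow> bool"
  for S eps where
  ret: "\<lbrakk> fw_ret S eps y xp x; (norm (x - y))\<^sup>2 \<le> 3 * eps \<rbrakk>
        \<Longrightarrow> afp_loop S eps y xp x y"
| cont: "\<lbrakk> fw_ret S eps y xp x; (norm (x - y))\<^sup>2 > 3 * eps;
           afp_loop S eps (y - (2/3) *\<^sub>R (y - x)) x xo yo \<rbrakk>
         \<Longrightarrow> afp_loop S eps y xp xo yo"

text \<open>afp S eps y1 x0 xo yo: O_AFP(y1, x0, eps, S) can return (xo, yo).\<close>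
definition afp :: "'a::real_inner set \<Rightarrow> real \<Rightarrow> 'a \<Rightarrow> 'a \<Rightarrow> 'a \<Rightarrow> 'a \<Rightarrow> bool" where
  "afp S eps y1 x0 xo yo \<longleftrightarrow>
     ((norm (x0 - y1))\<^sup>2 \<le> 3 * eps \<and> xo = x0 \<and> yo = y1) \<or>
     ((norm (x0 - y1))\<^sup>2 > 3 * eps \<and> afp_loop S eps y1 x0 xo yo)"

definition dpp_h :: "nat \<Rightarrow> real \<Rightarrow> real \<Rightarrow> (nat \<Rightarrow> 'a::real_inner \<Rightarrow> real)
    \<Rightarrow> (nat \<Rightarrow> 'a) \<Rightarrow> 'a \<Rightarrow> nat \<Rightarrow> 'a \<Rightarrow> real" where
  "dpp_h K \<delta> \<alpha> g grad yt m z =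
     inner ((1 / real K) *\<^sub>R (\<Sum>t\<in>block K m. grad t)) (z - yt)
     + \<delta> * (\<Sum>t\<in>block K m. max (g t z) 0)
     + \<alpha> / 2 * (norm (z - yt))\<^sup>2"

text \<open>dpp_run: x, yt (= tilde y), y (block-indexed) and grad (round-indexed) form a
  possible execution of Algorithm DPP.\<close>
definition dpp_run :: "'a::real_inner set \<Rightarrow> real \<Rightarrow> nat \<Rightarrow> nat \<Rightarrow> real \<Rightarrow> real \<Rightarrow> real
    \<Rightarrow> (nat \<Rightarrow> 'a \<Rightarrow> real) \<Rightarrow> (nat \<Rightarrow> 'a \<Rightarrow> real)
    \<Rightarrow> (nat \<Rightarrow> 'a) \<Rightarrow> (nat \<Rightarrow> 'a) \<Rightarrow> (nat \<Rightarrow> 'a) \<Rightarrow> (nat \<Rightarrow> 'a) \<Rightarrow> bool" where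
  "dpp_run Kset R T K eps \<delta> \<alpha> f g x yt y grad \<longleftrightarrow>
     x 1 \<in> Kset \<and> yt 1 = x 1 \<and>
     (\<forall>m\<in>{1..T div K}.
        (\<forall>t\<in>block K m. grad t \<in> subgradients (f t) (yt m)) \<and>
        is_arg_min (dpp_h K \<delta> \<alpha> g grad (yt m) m) (\<lambda>z. z \<in> cball 0 R) (y (Suc m)) \<and>
        afp Kset eps (y (Suc m)) (x m) (x (Suc m)) (yt (Suc m)))"

end

theory Submission
  imports Defs
begin


lemma fw_prop:
  assumes "fw_ret S eps y x xo" "x \<in> S" "convex S"
  shows "xo \<in> S \<and> ((\<forall>z\<in>S. inner (xo - y) (xo - z) \<le> eps) \<or> (norm (xo - y))\<^sup>2 \<le> 3 * eps)"
  using assms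
proof (induction rule: fw_ret.induct)
  case (stop x v)
  have vmin: "\<forall>z\<in>S. inner (x - y) v \<le> inner (x - y) z"
    using stop(1) unfolding loo_def is_arg_min_linorder by auto
  have "\<forall>z\<in>S. inner (x - y) (x - z) \<le> inner (x - y) (x - v)"
    using vmin by (auto simp: inner_diff_right)
  then show ?case using stop by fastforce
next
  case (step x v \<sigma> xo)
  have v: "v \<in> S" using step(1) unfolding loo_def is_arg_min_def by auto
  have s: "\<sigma> \<in> {0..1}" using step(3) unfolding is_arg_min_def by auto
  have "x + \<sigma> *\<^sub>R (v - x) = (1 - \<sigma>) *\<^sub>R x + \<sigma> *\<^sub>R v" by (simp add: algebra_simps)
  moreover have "(1 - \<sigma>) *\<^sub>R x + \<sigma> *\<^sub>R v \<in> S"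
    using step(6) v s \<open>convex S\<close> by (auto intro: convexD)
  ultimately show ?case using step by auto
qed

lemma afp_loop_prop:
  fixes S :: "'a::real_inner set"
  assumes "afp_loop S eps y xp xo yo" "xp \<in> S" "convex S" "y \<in> cball 0 R" "S \<subseteq> cball 0 R"
  shows "xo \<in> S \<and> yo \<in> cball 0 R \<and> (\<forall>z\<in>S. norm (yo - z) \<le> norm (y - z))"
  using assms
proof (induction rule: afp_loop.induct)
  case (ret y xp x)
  then show ?case using fw_prop by blast
next
  case (cont y xp x xo yo)
  from fw_prop[OF cont(1) cont(5) cont(6)] cont(2)
  have xS: "x \<in> S" and ip: "\<forall>z\<in>S. inner (x - y) (x - z) \<le> eps" by auto
  define y' where "y' = y - (2/3) *\<^sub>R (y - x)"
  have yy: "y = (1/3) *\<^sub>R y + (2/3) *\<^sub>R y" by (simp flip: scaleR_add_left)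
  have "y' = (1/3) *\<^sub>R y + (2/3) *\<^sub>R x" unfolding y'_def by (subst yy) (simp add: algebra_simps)
  moreover have "(1/3) *\<^sub>R y + (2/3) *\<^sub>R x \<in> cball (0::'a) R"
    using cont(7) xS cont(8) by (intro convexD[OF convex_cball]) auto
  ultimately have y'c: "y' \<in> cball 0 R" by simp
  have IH: "xo \<in> S \<and> yo \<in> cball 0 R \<and> (\<forall>z\<in>S. norm (yo - z) \<le> norm (y' - z))"
    using cont(4)[folded y'_def] xS cont(6) y'c cont(8) by blast
  have dec: "norm (y' - z) \<le> norm (y - z)" if zS: "z \<in> S" for z
  proof -
    define u where "u = y - z"
    define w where "w = y - x"
    have y'z: "y' - z = u - (2/3) *\<^sub>R w" unfolding u_def w_def y'_def by (simp add: algebra_simps)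
    have e1: "(norm (u - (2/3) *\<^sub>R w))\<^sup>2 = (norm u)\<^sup>2 - 4/3 * inner u w + 4/9 * (norm w)\<^sup>2"
      by (simp add: power2_norm_eq_inner inner_diff_left inner_diff_right inner_commute algebra_simps)
    have "inner (x - y) (x - z) \<le> eps" using ip zS by auto
    moreover have "inner u w = (norm w)\<^sup>2 - inner (x - y) (x - z)"
      unfolding u_def w_def by (simp add: power2_norm_eq_inner inner_diff_left inner_diff_right inner_commute algebra_simps)
    moreover have "(norm w)\<^sup>2 > 3 * eps" using cont(2) unfolding w_def by (simp add: norm_minus_commute)
    moreover have "(norm (y' - z))\<^sup>2 = (norm u)\<^sup>2 - 4/3 * inner u w + 4/9 * (norm w)\<^sup>2"
      using y'z e1 by simp
    ultimately have "(norm (y' - z))\<^sup>2 \<le> (norm (y - z))\<^sup>2"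
      unfolding u_def using zero_le_power2[of "norm w"] by linarith
    then show ?thesis by (rule power2_le_imp_le) simp
  qed
  show ?case using IH dec by (meson order_trans)
qed



lemma strong_min:
  fixes \<phi> :: "'a::real_inner \<Rightarrow> real"
  assumes C: "convex C" and ys: "ys \<in> C" and z: "z \<in> C" and a: "\<alpha> > 0"
    and conv: "\<And>a b t. a \<in> C \<Longrightarrow> b \<in> C \<Longrightarrow> 0 \<le> t \<Longrightarrow> t \<le> 1 \<Longrightarrow>
                 \<phi> ((1 - t) *\<^sub>R a + t *\<^sub>R b) \<le> (1 - t) * \<phi> a + t * \<phi> b"
    and mn: "\<And>w. w \<in> C \<Longrightarrow> \<phi> ys + \<alpha>/2 * (norm (ys - c))\<^sup>2 \<le> \<phi> w + \<alpha>/2 * (norm (w - c))\<^sup>2"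
  shows "\<phi> ys + \<alpha>/2 * (norm (ys - c))\<^sup>2 + \<alpha>/2 * (norm (z - ys))\<^sup>2 \<le> \<phi> z + \<alpha>/2 * (norm (z - c))\<^sup>2"
proof -
  define A where "A = \<phi> z - \<phi> ys + \<alpha> * inner (ys - c) (z - ys)"
  define B where "B = (norm (z - ys))\<^sup>2"
  have expand: "(norm ((1 - t) *\<^sub>R ys + t *\<^sub>R z - c))\<^sup>2
        = (norm (ys - c))\<^sup>2 + 2 * t * inner (ys - c) (z - ys) + t\<^sup>2 * B" for t
  proof -
    have "(1 - t) *\<^sub>R ys + t *\<^sub>R z - c = (ys - c) + t *\<^sub>R (z - ys)" by (simp add: algebra_simps)
    moreover have "(norm ((ys - c) + t *\<^sub>R (z - ys)))\<^sup>2 = (norm (ys - c))\<^sup>2 + 2 * t * inner (ys - c) (z - ys) + t\<^sup>2 * (norm (z - ys))\<^sup>2"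
      unfolding power2_norm_eq_inner
      by (simp add: inner_add_left inner_add_right inner_commute algebra_simps power2_eq_square)
    ultimately show ?thesis unfolding B_def by (simp only:)
  qed
  have step: "0 \<le> t * A + \<alpha>/2 * t\<^sup>2 * B" if t: "0 \<le> t" "t \<le> 1" for t
  proof -
    have w: "(1 - t) *\<^sub>R ys + t *\<^sub>R z \<in> C" using C ys z t by (intro convexD) auto
    have "\<phi> ys + \<alpha>/2 * (norm (ys - c))\<^sup>2 \<le> \<phi> ((1 - t) *\<^sub>R ys + t *\<^sub>R z) + \<alpha>/2 * (norm ((1 - t) *\<^sub>R ys + t *\<^sub>R z - c))\<^sup>2"
      using mn[OF w] .
    also have "\<dots> \<le> (1 - t) * \<phi> ys + t * \<phi> z + \<alpha>/2 * ((norm (ys - c))\<^sup>2 + 2 * t * inner (ys - c) (z - ys) + t\<^sup>2 * B)"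
      using conv[OF ys z t] expand[of t] by simp
    finally show ?thesis unfolding A_def by (simp add: algebra_simps)
  qed
  have Bnn: "B \<ge> 0" unfolding B_def by simp
  have A0: "A \<ge> 0"
  proof (rule ccontr)
    assume "\<not> A \<ge> 0"
    hence An: "A < 0" by simp
    show False
    proof (cases "B = 0")
      case True
      then show ?thesis using step[of 1] An by simp
    next
      case False
      hence Bp: "B > 0" using Bnn by simp
      define t where "t = min 1 (- A / (\<alpha> * B))"
      have tp: "t > 0" unfolding t_def using An Bp a by (simp add: field_simps)
      have t1: "t \<le> 1" unfolding t_def by simp
      have tle: "t \<le> - A / (\<alpha> * B)" unfolding t_def by simp
      hence "t * (\<alpha> * B) \<le> - A" using Bp a by (simp add: field_simps)
      hence "t * (t * (\<alpha> * B)) \<le> t * (- A)" using tp by (intro mult_left_mono) auto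
      moreover have "\<alpha>/2 * t\<^sup>2 * B = t * (t * (\<alpha> * B)) / 2" by (simp add: power2_eq_square)
      ultimately have "\<alpha>/2 * t\<^sup>2 * B \<le> t * (- A) / 2" by linarith
      moreover have "t * A < 0" using tp An by (simp add: mult_pos_neg)
      ultimately have "t * A + \<alpha>/2 * t\<^sup>2 * B < 0" by linarith
      then show False using step[of t] tp t1 by simp
    qed
  qed
  have "(norm (z - c))\<^sup>2 = (norm (ys - c))\<^sup>2 + 2 * inner (ys - c) (z - ys) + B"
    using expand[of 1] by simp
  have gen: "\<And>N1 N2 I B pz py. N2 = N1 + 2*I + B \<Longrightarrow> 0 \<le> pz - py + \<alpha>*I \<Longrightarrow>
      py + \<alpha>/2*N1 + \<alpha>/2*B \<le> pz + \<alpha>/2*N2"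
  proof -
    fix N1 N2 I B pz py :: real
    assume "N2 = N1 + 2*I + B" "0 \<le> pz - py + \<alpha>*I"
    moreover from this(1) have "\<alpha>/2*N2 = \<alpha>/2*N1 + \<alpha>*I + \<alpha>/2*B" by (simp add: algebra_simps)
    ultimately show "py + \<alpha>/2*N1 + \<alpha>/2*B \<le> pz + \<alpha>/2*N2" by linarith
  qed
  show ?thesis using gen[OF \<open>(norm (z - c))\<^sup>2 = _\<close>] A0 unfolding A_def B_def by blast
qed



lemma blk_iff:
  assumes K: "K > 0" and m: "1 \<le> m"
  shows "t \<in> block K m \<longleftrightarrow> blk K t = m"
proof -
  have "blk K t = m \<longleftrightarrow> \<lceil>real t / real K\<rceil> = int m"
    unfolding blk_def using m by auto
  also have "\<dots> \<longleftrightarrow> real m - 1 < real t / real K \<and> real t / real K \<le> real m"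
    by (simp add: ceiling_eq_iff)
  also have "\<dots> \<longleftrightarrow> (real m - 1) * real K < real t \<and> real t \<le> real m * real K"
    using K by (simp add: field_simps)
  also have "\<dots> \<longleftrightarrow> (m - 1) * K < t \<and> t \<le> m * K"
  proof -
    have "(real m - 1) * real K = real ((m - 1) * K)" using m by (simp add: of_nat_diff)
    moreover have "real m * real K = real (m * K)" by simp
    ultimately show ?thesis by (simp only: of_nat_less_iff of_nat_le_iff)
  qed
  also have "\<dots> \<longleftrightarrow> t \<in> block K m" unfolding block_def by auto
  finally show ?thesis by simp
qed

lemma blk_ge1:
  assumes K: "K > 0" and t: "1 \<le> t"
  shows "1 \<le> blk K t"
proof -
  have "real t / real K > 0" using K t by simp
  hence "\<lceil>real t / real K\<rceil> \<ge> 1" by simp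
  then show ?thesis unfolding blk_def by linarith
qed

lemma blk_le:
  assumes K: "K > 0" and t: "t \<le> n * K"
  shows "blk K t \<le> n"
proof -
  have "real t / real K \<le> real n" using K t
    by (simp add: field_simps) (metis of_nat_le_iff of_nat_mult)
  hence "\<lceil>real t / real K\<rceil> \<le> int n" by (simp add: ceiling_le_iff)
  then show ?thesis unfolding blk_def by linarith
qed

lemma card_block: "1 \<le> m \<Longrightarrow> card (block K m) = K"
  unfolding block_def
proof -
  assume "1 \<le> m"
  then have "m * K = (m - 1) * K + K" by (cases m) auto
  then show "card {(m - 1) * K + 1..m * K} = K" by simp
qed



lemma afp_prop:
  fixes S :: "'a::real_inner set"
  assumes "afp S eps y1 x0 xo yo" "x0 \<in> S" "convex S" "y1 \<in> cball 0 R" "S \<subseteq> cball 0 R"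
  shows "xo \<in> S \<and> yo \<in> cball 0 R \<and> (\<forall>z\<in>S. norm (yo - z) \<le> norm (y1 - z))"
  using assms afp_loop_prop[of S eps y1 x0 xo yo R] unfolding afp_def by auto

lemma telescope:
  fixes D :: "nat \<Rightarrow> real"
  assumes "a \<le> Suc b" "\<And>m. D m \<ge> 0"
  shows "(\<Sum>m=a..b. D m - D (Suc m)) \<le> D a"
proof -
  have "(\<Sum>m=a..b. D m - D (Suc m)) = - (\<Sum>m=a..b. D (Suc m) - D m)"
    by (simp add: sum_negf[symmetric])
  also have "\<dots> = D a - D (Suc b)" using sum_Suc_diff[OF assms(1), of D] by simp
  finally show ?thesis using assms(2)[of "Suc b"] by simp
qed

lemma interval_set:
  fixes M :: "nat set"
  assumes "finite M" "M \<noteq> {}" "\<And>a b c. a \<in> M \<Longrightarrow> b \<in> M \<Longrightarrow> a \<le> c \<Longrightarrow> c \<le> b \<Longrightarrow> c \<in> M"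
  shows "M = {Min M..Max M}"
proof
  show "M \<subseteq> {Min M..Max M}" using assms(1) by (auto intro: Min_le Max_ge)
  show "{Min M..Max M} \<subseteq> M"
  proof
    fix c assume "c \<in> {Min M..Max M}"
    then show "c \<in> M" using assms(3)[OF Min_in[OF assms(1,2)] Max_in[OF assms(1,2)]] by auto
  qed
qed

lemma lip:
  fixes h :: "'a::real_inner \<Rightarrow> real"
  assumes "\<And>z. z \<in> C \<Longrightarrow> subgradients h z \<noteq> {} \<and> (\<forall>d\<in>subgradients h z. norm d \<le> G)"
    and "a \<in> C"
  shows "h a - h b \<le> G * norm (a - b)"
proof -
  obtain d where d: "d \<in> subgradients h a" and nd: "norm d \<le> G" using assms by blast
  have "h b \<ge> h a + inner d (b - a)" using d unfolding subgradients_def by auto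
  moreover have "- inner d (b - a) = inner d (a - b)" by (simp add: inner_diff_right)
  moreover have "inner d (a - b) \<le> norm d * norm (a - b)" by (rule norm_cauchy_schwarz)
  moreover have "norm d * norm (a - b) \<le> G * norm (a - b)" using nd by (simp add: mult_right_mono)
  ultimately show ?thesis by linarith
qed



theorem lemma2:
  fixes Kset :: "'a::euclidean_space set"
    and R Gf Gg eps \<delta> \<alpha> :: real and T K s e :: nat
    and f g :: "nat \<Rightarrow> 'a \<Rightarrow> real"
    and x yt y grad :: "nat \<Rightarrow> 'a"
  assumes Kconv: "convex Kset" and Kcomp: "compact Kset"
    and K0: "0 \<in> Kset" and KR: "Kset \<subseteq> cball 0 R" and Rpos: "R > 0"
    and fconv: "\<And>t. convex_on (cball 0 R) (f t)"
    and gconv: "\<And>t. convex_on (cball 0 R) (g t)"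
    and fsub: "\<And>t z. z \<in> cball 0 R \<Longrightarrow> subgradients (f t) z \<noteq> {}
                     \<and> (\<forall>d\<in>subgradients (f t) z. norm d \<le> Gf)"
    and gsub: "\<And>t z. z \<in> cball 0 R \<Longrightarrow> subgradients (g t) z \<noteq> {}
                     \<and> (\<forall>d\<in>subgradients (g t) z. norm d \<le> Gg)"
    and Kpos: "K > 0" and Kdvd: "K dvd T"
    and epspos: "eps > 0" and dpos: "\<delta> > 0" and apos: "\<alpha> > 0"
    and run: "dpp_run Kset R T K eps \<delta> \<alpha> f g x yt y grad"
    and se: "1 \<le> s" "s < e" "e \<le> T"
    and feas: "{z \<in> Kset. \<forall>t\<in>{s..e}. g t z \<le> 0} \<noteq> {}"
  shows "(\<forall>z\<in>{z \<in> Kset. \<forall>t\<in>{s..e}. g t z \<le> 0}.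
            (\<Sum>t=s..e. f t (yt (blk K t))) - (\<Sum>t=s..e. f t z)
              \<le> 2 * K * R * (2 * Gf + R * \<alpha>) + Gf\<^sup>2 / (2 * \<alpha>) * T)
       \<and> (\<forall>c>0. (\<Sum>t=s..e. max (g t (yt (blk K t))) 0)
              \<le> Gg\<^sup>2 / (2 * c) * T + 2 * c * R * (Gf * T / \<alpha> + R * K)
                 + 2 * \<alpha> * R\<^sup>2 / \<delta> + (Gf / \<alpha> + 4 * R) * (Gf * T / (2 * \<delta> * K))
                 + 4 * K * R * Gg)"
proof -
  define NB where "NB = T div K"
  have TNB: "T = NB * K" using Kdvd unfolding NB_def by simp
  note run' = run[unfolded dpp_run_def]
  have x1: "x 1 \<in> Kset" using conjunct1[OF run'] .
  have yt1: "yt 1 = x 1" using conjunct1[OF conjunct2[OF run']] .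
  have runall: "\<forall>m\<in>{1..NB}. (\<forall>t\<in>block K m. grad t \<in> subgradients (f t) (yt m))
      \<and> is_arg_min (dpp_h K \<delta> \<alpha> g grad (yt m) m) (\<lambda>z. z \<in> cball 0 R) (y (Suc m))
      \<and> afp Kset eps (y (Suc m)) (x m) (x (Suc m)) (yt (Suc m))"
    unfolding NB_def using conjunct2[OF conjunct2[OF run']] .
  have runm: "\<And>m. m \<in> {1..NB} \<Longrightarrow> (\<forall>t\<in>block K m. grad t \<in> subgradients (f t) (yt m))
      \<and> is_arg_min (dpp_h K \<delta> \<alpha> g grad (yt m) m) (\<lambda>z. z \<in> cball 0 R) (y (Suc m))
      \<and> afp Kset eps (y (Suc m)) (x m) (x (Suc m)) (yt (Suc m))"
    using runall by (rule bspec)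
  have ycb: "\<And>m. m \<in> {1..NB} \<Longrightarrow> y (Suc m) \<in> cball 0 R"
    using runm unfolding is_arg_min_def by blast
  have inv: "1 \<le> m \<Longrightarrow> m \<le> NB + 1 \<Longrightarrow> x m \<in> Kset \<and> yt m \<in> cball 0 R" for m
  proof (induction m)
    case 0 then show ?case by simp
  next
    case (Suc n)
    show ?case
    proof (cases "n = 0")
      case True then show ?thesis using x1 yt1 KR by auto
    next
      case False
      then have n: "n \<in> {1..NB}" using Suc.prems by auto
      have "x n \<in> Kset" using Suc.IH n by auto
      then show ?thesis using afp_prop[OF conjunct2[OF conjunct2[OF runm[OF n]]] _ Kconv ycb[OF n] KR] by blast
    qed
  qed
  have proj: "\<And>m z. m \<in> {1..NB} \<Longrightarrow> z \<in> Kset \<Longrightarrow> norm (yt (Suc m) - z) \<le> norm (y (Suc m) - z)"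
  proof -
    fix m z assume m: "m \<in> {1..NB}" and z: "z \<in> Kset"
    have "x m \<in> Kset" using inv[of m] m by auto
    then show "norm (yt (Suc m) - z) \<le> norm (y (Suc m) - z)"
      using afp_prop[OF conjunct2[OF conjunct2[OF runm[OF m]]] _ Kconv ycb[OF m] KR] z by blast
  qed
  have Gf0: "Gf \<ge> 0"
  proof -
    obtain d where "d \<in> subgradients (f 0) 0" "norm d \<le> Gf" using fsub[of 0 0] Rpos by fastforce
    then show ?thesis using norm_ge_zero[of d] by linarith
  qed
  have Gg0: "Gg \<ge> 0"
  proof -
    obtain d where "d \<in> subgradients (g 0) 0" "norm d \<le> Gg" using gsub[of 0 0] Rpos by fastforce
    then show ?thesis using norm_ge_zero[of d] by linarith
  qed
  have flip: "\<And>t a b. a \<in> cball 0 R \<Longrightarrow> f t a - f t b \<le> Gf * norm (a - b)"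
  proof -
    fix t a b assume a: "a \<in> cball (0::'a) R"
    show "f t a - f t b \<le> Gf * norm (a - b)" by (rule lip[OF fsub a])
  qed
  have glip: "\<And>t a b. a \<in> cball 0 R \<Longrightarrow> b \<in> cball 0 R \<Longrightarrow>
      max (g t a) 0 - max (g t b) 0 \<le> Gg * norm (a - b)"
  proof -
    fix t a b assume a: "a \<in> cball (0::'a) R" and b: "b \<in> cball (0::'a) R"
    have "g t a - g t b \<le> Gg * norm (a - b)" by (rule lip[OF gsub a])
    moreover have "g t b - g t a \<le> Gg * norm (b - a)" by (rule lip[OF gsub b])
    moreover have "norm (b - a) = norm (a - b)" by (rule norm_minus_commute)
    ultimately show "max (g t a) 0 - max (g t b) 0 \<le> Gg * norm (a - b)"
      using Gg0 norm_ge_zero[of "a - b"] mult_nonneg_nonneg[of Gg "norm (a - b)"] by linarith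
  qed
  have dist2R: "\<And>a b. a \<in> cball (0::'a) R \<Longrightarrow> b \<in> cball 0 R \<Longrightarrow> norm (a - b) \<le> 2 * R"
  proof -
    fix a b :: 'a assume "a \<in> cball 0 R" "b \<in> cball 0 R"
    then have "norm a \<le> R" "norm b \<le> R" by auto
    then show "norm (a - b) \<le> 2 * R" using norm_triangle_ineq4[of a b] by linarith
  qed

  have blockineq: "\<And>m z. m \<in> {1..NB} \<Longrightarrow> z \<in> Kset \<Longrightarrow> (\<forall>t\<in>block K m. g t z \<le> 0) \<Longrightarrow>
     (\<Sum>t\<in>block K m. f t (yt m) - f t z)
        \<le> K * (\<alpha>/2 * ((norm (yt m - z))\<^sup>2 - (norm (yt (Suc m) - z))\<^sup>2) + Gf\<^sup>2/(2*\<alpha>))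
   \<and> \<delta> * (\<Sum>t\<in>block K m. max (g t (y (Suc m))) 0) + \<alpha>/2 * (norm (y (Suc m) - yt m))\<^sup>2
        \<le> \<alpha>/2 * ((norm (yt m - z))\<^sup>2 - (norm (yt (Suc m) - z))\<^sup>2) + 2*R*Gf"
  proof -
    fix m z assume m: "m \<in> {1..NB}" and zK: "z \<in> Kset" and gz: "\<forall>t\<in>block K m. g t z \<le> 0"
    define c where "c = yt m"
    define y' where "y' = y (Suc m)"
    have cR: "c \<in> cball 0 R" using inv[of m] m unfolding c_def by auto
    have zR: "z \<in> cball 0 R" using zK KR by auto
    have y'R: "y' \<in> cball 0 R" using ycb[OF m] unfolding y'_def .
    have gr: "\<forall>t\<in>block K m. grad t \<in> subgradients (f t) c" using runm[OF m] unfolding c_def by blast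
    have grn: "\<And>t. t \<in> block K m \<Longrightarrow> norm (grad t) \<le> Gf" using gr fsub[OF cR] by blast
    have cardb: "card (block K m) = K" using m by (intro card_block) auto
    have finb: "finite (block K m)" unfolding block_def by simp
    define N where "N = (1 / real K) *\<^sub>R (\<Sum>t\<in>block K m. grad t)"
    have sumN: "(\<Sum>t\<in>block K m. grad t) = real K *\<^sub>R N" unfolding N_def using Kpos by simp
    have nN: "norm N \<le> Gf"
    proof -
      have "norm (\<Sum>t\<in>block K m. grad t) \<le> (\<Sum>t\<in>block K m. norm (grad t))" by (rule norm_sum)
      also have "\<dots> \<le> (\<Sum>t\<in>block K m. Gf)" using grn by (intro sum_mono) auto
      also have "\<dots> = real K * Gf" using cardb by simp
      finally have "norm (real K *\<^sub>R N) \<le> real K * Gf" using sumN by simp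
      then show ?thesis using Kpos by simp
    qed
    define G where "G = (\<lambda>w. \<delta> * (\<Sum>t\<in>block K m. max (g t w) 0))"
    define \<phi> where "\<phi> = (\<lambda>w. inner N (w - c) + G w)"
    have heq: "\<And>w. dpp_h K \<delta> \<alpha> g grad c m w = \<phi> w + \<alpha>/2 * (norm (w - c))\<^sup>2"
      unfolding dpp_h_def \<phi>_def G_def N_def by simp
    have mn: "\<And>w. w \<in> cball 0 R \<Longrightarrow> \<phi> y' + \<alpha>/2 * (norm (y' - c))\<^sup>2 \<le> \<phi> w + \<alpha>/2 * (norm (w - c))\<^sup>2"
      using runm[OF m] unfolding y'_def c_def[symmetric] is_arg_min_linorder heq by blast
    have conv: "\<phi> ((1 - t) *\<^sub>R a + t *\<^sub>R b) \<le> (1 - t) * \<phi> a + t * \<phi> b"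
      if a: "a \<in> cball 0 R" and b: "b \<in> cball 0 R" and t: "0 \<le> t" "t \<le> 1" for a b t
    proof -
      have lin: "inner N ((1 - t) *\<^sub>R a + t *\<^sub>R b - c) = (1 - t) * inner N (a - c) + t * inner N (b - c)"
      proof -
        have "(1 - t) *\<^sub>R a + t *\<^sub>R b - c = (1 - t) *\<^sub>R (a - c) + t *\<^sub>R (b - c)"
          by (simp add: algebra_simps)
        then show ?thesis by (simp add: inner_add_right)
      qed
      have mx: "max (g i ((1 - t) *\<^sub>R a + t *\<^sub>R b)) 0 \<le> (1 - t) * max (g i a) 0 + t * max (g i b) 0" for i
      proof -
        have "g i ((1 - t) *\<^sub>R a + t *\<^sub>R b) \<le> (1 - t) * g i a + t * g i b"
          using convex_onD[OF gconv t a b] .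
        moreover have "(1 - t) * g i a \<le> (1 - t) * max (g i a) 0" using t by (intro mult_left_mono) auto
        moreover have "t * g i b \<le> t * max (g i b) 0" using t by (intro mult_left_mono) auto
        moreover have "0 \<le> (1 - t) * max (g i a) 0 + t * max (g i b) 0" using t by simp
        ultimately show ?thesis by linarith
      qed
      have "G ((1 - t) *\<^sub>R a + t *\<^sub>R b) \<le> \<delta> * (\<Sum>i\<in>block K m. (1 - t) * max (g i a) 0 + t * max (g i b) 0)"
        unfolding G_def using dpos mx by (intro mult_left_mono sum_mono) auto
      also have "\<dots> = \<delta> * ((1 - t) * (\<Sum>i\<in>block K m. max (g i a) 0) + t * (\<Sum>i\<in>block K m. max (g i b) 0))"
        by (simp add: sum.distrib sum_distrib_left)
      also have "\<dots> = (1 - t) * G a + t * G b"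
        unfolding G_def by (simp add: algebra_simps)
      finally show ?thesis unfolding \<phi>_def using lin by (simp add: algebra_simps)
    qed
    have KI: "\<phi> y' + \<alpha>/2 * (norm (y' - c))\<^sup>2 + \<alpha>/2 * (norm (z - y'))\<^sup>2 \<le> \<phi> z + \<alpha>/2 * (norm (z - c))\<^sup>2"
      by (rule strong_min[OF convex_cball y'R zR apos conv mn]) auto
    have Gz: "G z = 0" unfolding G_def using gz by simp
    have Gy: "G y' \<ge> 0" unfolding G_def using dpos by (simp add: sum_nonneg)
    have pj: "(norm (yt (Suc m) - z))\<^sup>2 \<le> (norm (z - y'))\<^sup>2"
      using proj[OF m zK] unfolding y'_def by (simp add: norm_minus_commute power_mono)
    have Dc: "norm (z - c) = norm (yt m - z)" unfolding c_def by (rule norm_minus_commute)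
    have core: "inner N (y' - c) + G y' + \<alpha>/2 * (norm (y' - c))\<^sup>2
        \<le> inner N (z - c) + \<alpha>/2 * ((norm (yt m - z))\<^sup>2 - (norm (yt (Suc m) - z))\<^sup>2)"
    proof -
      have KI': "inner N (y' - c) + G y' + \<alpha>/2 * (norm (y' - c))\<^sup>2 + \<alpha>/2 * (norm (z - y'))\<^sup>2
          \<le> inner N (z - c) + \<alpha>/2 * (norm (yt m - z))\<^sup>2"
        using KI Gz Dc unfolding \<phi>_def by simp
      have "\<alpha>/2 * (norm (yt (Suc m) - z))\<^sup>2 \<le> \<alpha>/2 * (norm (z - y'))\<^sup>2"
        using pj apos by (intro mult_left_mono) auto
      with KI' show ?thesis by (simp add: algebra_simps)
    qed
    define d where "d = norm (y' - c)"
    define \<Delta> where "\<Delta> = (norm (yt m - z))\<^sup>2 - (norm (yt (Suc m) - z))\<^sup>2"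
    have core': "inner N (y' - c) + G y' + \<alpha>/2 * d\<^sup>2 \<le> inner N (z - c) + \<alpha>/2 * \<Delta>"
      using core unfolding d_def \<Delta>_def .
    have i1: "- inner N (y' - c) \<le> Gf * d"
    proof -
      have "- inner N (y' - c) = inner N (c - y')" by (simp add: inner_diff_right)
      also have "\<dots> \<le> norm N * norm (c - y')" by (rule norm_cauchy_schwarz)
      also have "\<dots> \<le> Gf * d" unfolding d_def using nN by (simp add: norm_minus_commute mult_right_mono)
      finally show ?thesis .
    qed
    have i2: "inner N (z - c) - inner N (y' - c) \<le> 2 * R * Gf"
    proof -
      have "inner N (z - c) - inner N (y' - c) = inner N (z - y')" by (simp add: inner_diff_right)
      also have "\<dots> \<le> norm N * norm (z - y')" by (rule norm_cauchy_schwarz)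
      also have "\<dots> \<le> Gf * (2 * R)" using nN dist2R[OF zR y'R] Gf0 by (intro mult_mono) auto
      finally show ?thesis by (simp add: mult_ac)
    qed
    have quad: "Gf * d - \<alpha>/2 * d\<^sup>2 \<le> Gf\<^sup>2 / (2 * \<alpha>)"
    proof -
      have "Gf\<^sup>2 / (2 * \<alpha>) - (Gf * d - \<alpha>/2 * d\<^sup>2) = (Gf - \<alpha> * d)\<^sup>2 / (2 * \<alpha>)"
        using apos by (simp add: field_simps power2_eq_square)
      moreover have "(Gf - \<alpha> * d)\<^sup>2 / (2 * \<alpha>) \<ge> 0" using apos by simp
      ultimately show ?thesis by linarith
    qed
    have sub: "\<And>t. t \<in> block K m \<Longrightarrow> f t c - f t z \<le> inner (grad t) (c - z)"
    proof -
      fix t assume "t \<in> block K m"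
      then have "f t z \<ge> f t c + inner (grad t) (z - c)" using gr unfolding subgradients_def by blast
      moreover have "inner (grad t) (z - c) = - inner (grad t) (c - z)" by (simp add: inner_diff_right)
      ultimately show "f t c - f t z \<le> inner (grad t) (c - z)" by linarith
    qed
    have "(\<Sum>t\<in>block K m. f t c - f t z) \<le> (\<Sum>t\<in>block K m. inner (grad t) (c - z))"
      using sub by (rule sum_mono)
    also have "\<dots> = inner (\<Sum>t\<in>block K m. grad t) (c - z)" by (simp add: inner_sum_left)
    also have "\<dots> = real K * inner N (c - z)" using sumN by simp
    finally have P1a: "(\<Sum>t\<in>block K m. f t c - f t z) \<le> real K * inner N (c - z)" .
    have "inner N (c - z) = - inner N (z - c)" by (simp add: inner_diff_right)
    then have "inner N (c - z) \<le> \<alpha>/2 * \<Delta> + Gf\<^sup>2/(2*\<alpha>)"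
      using core' i1 quad Gy by linarith
    then have "real K * inner N (c - z) \<le> real K * (\<alpha>/2 * \<Delta> + Gf\<^sup>2/(2*\<alpha>))"
      by (intro mult_left_mono) auto
    with P1a have P1: "(\<Sum>t\<in>block K m. f t (yt m) - f t z) \<le> real K * (\<alpha>/2 * \<Delta> + Gf\<^sup>2/(2*\<alpha>))"
      unfolding c_def by linarith
    have P2: "G y' + \<alpha>/2 * d\<^sup>2 \<le> \<alpha>/2 * \<Delta> + 2*R*Gf" using core' i2 by linarith
    show "(\<Sum>t\<in>block K m. f t (yt m) - f t z)
        \<le> K * (\<alpha>/2 * ((norm (yt m - z))\<^sup>2 - (norm (yt (Suc m) - z))\<^sup>2) + Gf\<^sup>2/(2*\<alpha>))
     \<and> \<delta> * (\<Sum>t\<in>block K m. max (g t (y (Suc m))) 0) + \<alpha>/2 * (norm (y (Suc m) - yt m))\<^sup>2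
        \<le> \<alpha>/2 * ((norm (yt m - z))\<^sup>2 - (norm (yt (Suc m) - z))\<^sup>2) + 2*R*Gf"
      using P1 P2 unfolding \<Delta>_def d_def G_def y'_def c_def by simp
  qed

  define M where "M = {m \<in> {1..NB}. block K m \<subseteq> {s..e}}"
  define F where "F = {t \<in> {s..e}. blk K t \<in> M}"
  define B where "B = {s..e} - F"
  have finM: "finite M" unfolding M_def by simp
  have cardM: "card M \<le> NB"
  proof -
    have "card M \<le> card {1..NB}" unfolding M_def by (rule card_mono) auto
    then show ?thesis by simp
  qed
  have cardMK: "real (card M) * real K \<le> real T"
  proof -
    have "card M * K \<le> NB * K" using cardM by simp
    then show ?thesis using TNB by (metis of_nat_le_iff of_nat_mult)
  qed
  have blkr: "\<And>t. t \<in> {s..e} \<Longrightarrow> 1 \<le> blk K t \<and> blk K t \<le> NB"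
  proof -
    fix t assume t: "t \<in> {s..e}"
    have "1 \<le> blk K t" using blk_ge1[OF Kpos, of t] t se by auto
    moreover have "blk K t \<le> NB" using blk_le[OF Kpos, of t NB] t se TNB by auto
    ultimately show "1 \<le> blk K t \<and> blk K t \<le> NB" by simp
  qed
  have ytb: "\<And>t. t \<in> {s..e} \<Longrightarrow> yt (blk K t) \<in> cball 0 R"
    using blkr inv by fastforce
  have blkM: "\<And>m t. m \<in> M \<Longrightarrow> t \<in> block K m \<Longrightarrow> blk K t = m"
    using blk_iff[OF Kpos] unfolding M_def by auto
  have splitsum: "(\<Sum>t=s..e. \<phi> t) = (\<Sum>m\<in>M. \<Sum>t\<in>block K m. \<phi> t) + (\<Sum>t\<in>B. \<phi> t)" for \<phi> :: "nat \<Rightarrow> real"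
  proof -
    have FS: "F \<subseteq> {s..e}" unfolding F_def by auto
    have "(\<Sum>t=s..e. \<phi> t) = (\<Sum>t\<in>B. \<phi> t) + (\<Sum>t\<in>F. \<phi> t)"
      unfolding B_def using sum.subset_diff[OF FS, of \<phi>] by simp
    moreover have "(\<Sum>t\<in>F. \<phi> t) = (\<Sum>m\<in>M. \<Sum>t\<in>block K m. \<phi> t)"
    proof -
      have "(\<Sum>m\<in>M. sum \<phi> {t. t \<in> F \<and> blk K t = m}) = sum \<phi> F"
        by (rule sum.group) (auto simp: F_def finM)
      moreover have "{t. t \<in> F \<and> blk K t = m} = block K m" if mM: "m \<in> M" for m
      proof -
        have m1: "1 \<le> m" and bs: "block K m \<subseteq> {s..e}" using mM unfolding M_def by auto
        show ?thesis
        proof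
          show "{t. t \<in> F \<and> blk K t = m} \<subseteq> block K m" using blk_iff[OF Kpos m1] by auto
          show "block K m \<subseteq> {t. t \<in> F \<and> blk K t = m}"
            using bs blkM[OF mM] mM unfolding F_def by auto
        qed
      qed
      ultimately show ?thesis by simp
    qed
    ultimately show ?thesis by simp
  qed
  have cardB: "card B \<le> 2 * K"
  proof -
    have "B \<subseteq> {s..<s+K} \<union> {e+1-K..e}"
    proof
      fix t assume tB: "t \<in> B"
      then have t: "t \<in> {s..e}" and nM: "blk K t \<notin> M" unfolding B_def F_def by auto
      define m where "m = blk K t"
      have m1: "1 \<le> m" and mN: "m \<le> NB" using blkr[OF t] unfolding m_def by auto
      have tb: "t \<in> block K m" using blk_iff[OF Kpos m1] unfolding m_def by simp
      have nb: "\<not> block K m \<subseteq> {s..e}" using nM m1 mN unfolding M_def m_def by auto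
      have mK: "m * K = (m - 1) * K + K" using m1 by (cases m) auto
      show "t \<in> {s..<s+K} \<union> {e+1-K..e}"
      proof (rule ccontr)
        assume "t \<notin> {s..<s+K} \<union> {e+1-K..e}"
        then have h: "s + K \<le> t" "t + K \<le> e" using t by auto
        have "block K m \<subseteq> {s..e}"
        proof
          fix u assume "u \<in> block K m"
          then show "u \<in> {s..e}" using tb h mK unfolding block_def by auto
        qed
        with nb show False by simp
      qed
    qed
    then have "card B \<le> card ({s..<s+K} \<union> {e+1-K..e})" by (rule card_mono[rotated]) simp
    also have "\<dots> \<le> card {s..<s+K} + card {e+1-K..e}" by (rule card_Un_le)
    also have "\<dots> \<le> 2 * K" by simp
    finally show ?thesis .
  qed
  have tele: "(\<Sum>m\<in>M. (norm (yt m - z))\<^sup>2 - (norm (yt (Suc m) - z))\<^sup>2) \<le> 4 * R\<^sup>2" if zK: "z \<in> Kset" for z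
  proof (cases "M = {}")
    case True then show ?thesis by simp
  next
    case False
    have Mi: "M = {Min M..Max M}"
    proof (rule interval_set[OF finM False])
      fix a b c assume a: "a \<in> M" and b: "b \<in> M" and ac: "a \<le> c" and cb: "c \<le> b"
      have a1: "1 \<le> a" and ab: "block K a \<subseteq> {s..e}" and bN: "b \<le> NB" and bb: "block K b \<subseteq> {s..e}"
        using a b unfolding M_def by auto
      have "(a - 1) * K + 1 \<in> block K a" unfolding block_def using a1 Kpos
        by (cases a) auto
      then have sa: "s \<le> (a - 1) * K + 1" using ab by auto
      have "b * K \<in> block K b" unfolding block_def using a1 ac cb Kpos
        by (cases b) auto
      then have be: "b * K \<le> e" using bb by auto
      have h1: "(a - 1) * K \<le> (c - 1) * K" using ac by (intro mult_le_mono1 diff_le_mono)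
      have h2: "c * K \<le> b * K" using cb by simp
      have h3: "s \<le> (c - 1) * K + 1" using sa h1 by linarith
      have h4: "c * K \<le> e" using be h2 by linarith
      have "block K c \<subseteq> {s..e}" unfolding block_def using h3 h4 by auto
      then show "c \<in> M" using a1 ac cb bN unfolding M_def by auto
    qed
    have Mn: "Min M \<in> M" using finM False by simp
    have "(\<Sum>m\<in>M. (norm (yt m - z))\<^sup>2 - (norm (yt (Suc m) - z))\<^sup>2)
        = (\<Sum>m=Min M..Max M. (norm (yt m - z))\<^sup>2 - (norm (yt (Suc m) - z))\<^sup>2)" using Mi by simp
    also have "\<dots> \<le> (norm (yt (Min M) - z))\<^sup>2"
      using Max_ge[OF finM Mn] by (intro telescope) auto
    also have "\<dots> \<le> (2 * R)\<^sup>2"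
    proof -
      have "yt (Min M) \<in> cball 0 R" using Mn inv unfolding M_def by auto
      then have "norm (yt (Min M) - z) \<le> 2 * R" using dist2R zK KR by auto
      then show ?thesis by (intro power_mono) auto
    qed
    finally show ?thesis by (simp add: power_mult_distrib)
  qed

  have Kr: "real K > 0" using Kpos by simp
  have TK: "real T / real K = real NB" using TNB Kpos by simp
  have C1: "(\<Sum>t=s..e. f t (yt (blk K t))) - (\<Sum>t=s..e. f t z)
              \<le> 2 * K * R * (2 * Gf + R * \<alpha>) + Gf\<^sup>2 / (2 * \<alpha>) * T"
    if zK: "z \<in> Kset" and zg: "\<forall>t\<in>{s..e}. g t z \<le> 0" for z
  proof -
    have zR: "z \<in> cball 0 R" using zK KR by auto
    define \<Delta> where "\<Delta> = (\<lambda>m. (norm (yt m - z))\<^sup>2 - (norm (yt (Suc m) - z))\<^sup>2)"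
    define c0 where "c0 = Gf\<^sup>2 / (2 * \<alpha>)"
    have c00: "c0 \<ge> 0" unfolding c0_def using apos by simp
    have "(\<Sum>t=s..e. f t (yt (blk K t))) - (\<Sum>t=s..e. f t z) = (\<Sum>t=s..e. f t (yt (blk K t)) - f t z)"
      by (simp add: sum_subtractf)
    also have "\<dots> = (\<Sum>m\<in>M. \<Sum>t\<in>block K m. f t (yt (blk K t)) - f t z) + (\<Sum>t\<in>B. f t (yt (blk K t)) - f t z)"
      by (rule splitsum)
    finally have eq: "(\<Sum>t=s..e. f t (yt (blk K t))) - (\<Sum>t=s..e. f t z) = (\<Sum>m\<in>M. \<Sum>t\<in>block K m. f t (yt (blk K t)) - f t z) + (\<Sum>t\<in>B. f t (yt (blk K t)) - f t z)" .
    have S1: "(\<Sum>m\<in>M. \<Sum>t\<in>block K m. f t (yt (blk K t)) - f t z) \<le> (\<Sum>m\<in>M. real K * (\<alpha>/2 * \<Delta> m + c0))"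
    proof (rule sum_mono)
      fix m assume mM: "m \<in> M"
      have m: "m \<in> {1..NB}" and bs: "block K m \<subseteq> {s..e}" using mM unfolding M_def by auto
      have "(\<Sum>t\<in>block K m. f t (yt (blk K t)) - f t z) = (\<Sum>t\<in>block K m. f t (yt m) - f t z)"
        using blkM[OF mM] by (intro sum.cong) auto
      also have "\<dots> \<le> real K * (\<alpha>/2 * \<Delta> m + c0)"
        using blockineq[OF m zK] zg bs unfolding \<Delta>_def c0_def by blast
      finally show "(\<Sum>t\<in>block K m. f t (yt (blk K t)) - f t z) \<le> real K * (\<alpha>/2 * \<Delta> m + c0)" .
    qed
    also have "\<dots> = real K * \<alpha>/2 * (\<Sum>m\<in>M. \<Delta> m) + real (card M) * real K * c0"
      by (simp add: sum.distrib sum_distrib_left algebra_simps)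
    also have "\<dots> \<le> real K * \<alpha>/2 * (4 * R\<^sup>2) + real T * c0"
    proof -
      have "real K * \<alpha>/2 * (\<Sum>m\<in>M. \<Delta> m) \<le> real K * \<alpha>/2 * (4 * R\<^sup>2)"
        using tele[OF zK] apos unfolding \<Delta>_def by (intro mult_left_mono) auto
      moreover have "real (card M) * real K * c0 \<le> real T * c0" using cardMK c00 by (rule mult_right_mono)
      ultimately show ?thesis by linarith
    qed
    finally have S1': "(\<Sum>m\<in>M. \<Sum>t\<in>block K m. f t (yt (blk K t)) - f t z) \<le> real K * \<alpha>/2 * (4 * R\<^sup>2) + real T * c0" .
    have "(\<Sum>t\<in>B. f t (yt (blk K t)) - f t z) \<le> real (card B) * (Gf * (2 * R))"
    proof (rule sum_bounded_above)
      fix t assume "t \<in> B"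
      then have t: "t \<in> {s..e}" unfolding B_def by auto
      have "f t (yt (blk K t)) - f t z \<le> Gf * norm (yt (blk K t) - z)" using flip ytb[OF t] by blast
      also have "\<dots> \<le> Gf * (2 * R)" using dist2R[OF ytb[OF t] zR] Gf0 by (intro mult_left_mono) auto
      finally show "f t (yt (blk K t)) - f t z \<le> Gf * (2 * R)" .
    qed
    also have "\<dots> \<le> real (2 * K) * (Gf * (2 * R))"
      using cardB Gf0 Rpos by (intro mult_right_mono) auto
    finally have S2: "(\<Sum>t\<in>B. f t (yt (blk K t)) - f t z) \<le> real (2 * K) * (Gf * (2 * R))" .
    have "real K * \<alpha>/2 * (4 * R\<^sup>2) + real T * c0 + real (2 * K) * (Gf * (2 * R))
        = 2 * K * R * (2 * Gf + R * \<alpha>) + Gf\<^sup>2 / (2 * \<alpha>) * T"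
      unfolding c0_def by (simp add: algebra_simps power2_eq_square)
    then show ?thesis using eq S1' S2 by linarith
  qed

  obtain z0 where z0K: "z0 \<in> Kset" and z0g: "\<forall>t\<in>{s..e}. g t z0 \<le> 0" using feas by auto
  have z0R: "z0 \<in> cball 0 R" using z0K KR by auto
  have C2: "(\<Sum>t=s..e. max (g t (yt (blk K t))) 0)
              \<le> Gg\<^sup>2 / (2 * c) * T + 2 * c * R * (Gf * T / \<alpha> + R * K)
                 + 2 * \<alpha> * R\<^sup>2 / \<delta> + (Gf / \<alpha> + 4 * R) * (Gf * T / (2 * \<delta> * K))
                 + 4 * K * R * Gg" if cpos: "c > 0" for c
  proof -
    define \<Delta> where "\<Delta> = (\<lambda>m. (norm (yt m - z0))\<^sup>2 - (norm (yt (Suc m) - z0))\<^sup>2)"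
    define P where "P = \<alpha> / (2 * \<delta>) + real K * c / 2"
    define q1 where "q1 = 2 * R * Gf / \<delta>"
    define q2 where "q2 = real K * (Gg\<^sup>2 / (2 * c))"
    define q3 where "q3 = real K * (2 * c * R * Gf / \<alpha>)"
    have P0: "P \<ge> 0" unfolding P_def using apos dpos cpos by simp
    have q10: "q1 \<ge> 0" unfolding q1_def using Rpos Gf0 dpos by simp
    have q20: "q2 \<ge> 0" unfolding q2_def using cpos by simp
    have q30: "q3 \<ge> 0" unfolding q3_def using Rpos Gf0 apos cpos by simp
    have eq: "(\<Sum>t=s..e. max (g t (yt (blk K t))) 0) = (\<Sum>m\<in>M. \<Sum>t\<in>block K m. max (g t (yt (blk K t))) 0) + (\<Sum>t\<in>B. max (g t (yt (blk K t))) 0)"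
      by (rule splitsum)
    have S1: "(\<Sum>m\<in>M. \<Sum>t\<in>block K m. max (g t (yt (blk K t))) 0) \<le> (\<Sum>m\<in>M. P * \<Delta> m + (q1 + q2 + q3))"
    proof (rule sum_mono)
      fix m assume mM: "m \<in> M"
      have m: "m \<in> {1..NB}" and bs: "block K m \<subseteq> {s..e}" using mM unfolding M_def by auto
      define y' where "y' = y (Suc m)"
      define d where "d = norm (yt m - y')"
      define S where "S = (\<Sum>t\<in>block K m. max (g t y') 0)"
      have ymR: "yt m \<in> cball 0 R" using inv[of m] m by auto
      have y'R: "y' \<in> cball 0 R" using ycb[OF m] unfolding y'_def .
      have cardb: "card (block K m) = K" using m by (intro card_block) auto
      have BI: "\<delta> * S + \<alpha>/2 * d\<^sup>2 \<le> \<alpha>/2 * \<Delta> m + 2*R*Gf"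
        using conjunct2[OF blockineq[OF m z0K]] z0g bs unfolding \<Delta>_def S_def d_def y'_def
        by (auto simp: norm_minus_commute)
      have S0: "S \<ge> 0" unfolding S_def by (simp add: sum_nonneg)
      have hS: "S \<le> (\<alpha>/2 * \<Delta> m + 2*R*Gf) / \<delta>"
      proof -
        have "\<delta> * S \<le> \<alpha>/2 * \<Delta> m + 2*R*Gf" using BI apos zero_le_power2[of d] mult_nonneg_nonneg[of "\<alpha>/2" "d\<^sup>2"] by linarith
        then show ?thesis using dpos by (simp add: field_simps)
      qed
      have hd: "d\<^sup>2 \<le> \<Delta> m + 4*R*Gf/\<alpha>"
      proof -
        have "\<alpha>/2 * d\<^sup>2 \<le> \<alpha>/2 * \<Delta> m + 2*R*Gf" using BI dpos S0 mult_nonneg_nonneg[of \<delta> S] by linarith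
        then have "\<alpha> * d\<^sup>2 \<le> \<alpha> * \<Delta> m + 4*R*Gf" by linarith
        then show ?thesis using apos by (simp add: field_simps)
      qed
      have qd: "Gg * d \<le> Gg\<^sup>2 / (2 * c) + c/2 * d\<^sup>2"
      proof -
        have "Gg\<^sup>2 / (2 * c) + c/2 * d\<^sup>2 - Gg * d = (Gg - c * d)\<^sup>2 / (2 * c)"
          using cpos by (simp add: field_simps power2_eq_square)
        moreover have "(Gg - c * d)\<^sup>2 / (2 * c) \<ge> 0" using cpos by simp
        ultimately show ?thesis by linarith
      qed
      have "(\<Sum>t\<in>block K m. max (g t (yt (blk K t))) 0) = (\<Sum>t\<in>block K m. max (g t (yt m)) 0)"
        using blkM[OF mM] by (intro sum.cong) auto
      also have "\<dots> \<le> (\<Sum>t\<in>block K m. max (g t y') 0 + Gg * d)"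
      proof (rule sum_mono)
        fix t
        show "max (g t (yt m)) 0 \<le> max (g t y') 0 + Gg * d"
          using glip[OF ymR y'R, of t] unfolding d_def by linarith
      qed
      also have "\<dots> = S + real K * (Gg * d)" unfolding S_def using cardb by (simp add: sum.distrib)
      also have "\<dots> \<le> (\<alpha>/2 * \<Delta> m + 2*R*Gf) / \<delta> + real K * (Gg\<^sup>2 / (2 * c) + c/2 * (\<Delta> m + 4*R*Gf/\<alpha>))"
      proof -
        have "Gg * d \<le> Gg\<^sup>2 / (2 * c) + c/2 * (\<Delta> m + 4*R*Gf/\<alpha>)"
        proof -
          have "c/2 * d\<^sup>2 \<le> c/2 * (\<Delta> m + 4*R*Gf/\<alpha>)" using hd cpos by (intro mult_left_mono) auto
          then show ?thesis using qd by linarith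
        qed
        then have "real K * (Gg * d) \<le> real K * (Gg\<^sup>2 / (2 * c) + c/2 * (\<Delta> m + 4*R*Gf/\<alpha>))"
          by (intro mult_left_mono) auto
        then show ?thesis using hS by linarith
      qed
      also have "\<dots> = P * \<Delta> m + (q1 + q2 + q3)"
        unfolding P_def q1_def q2_def q3_def using dpos apos cpos
        by (simp add: field_simps)
      finally show "(\<Sum>t\<in>block K m. max (g t (yt (blk K t))) 0) \<le> P * \<Delta> m + (q1 + q2 + q3)" .
    qed
    also have "\<dots> = P * (\<Sum>m\<in>M. \<Delta> m) + real (card M) * q1 + real (card M) * q2 + real (card M) * q3"
      by (simp add: sum.distrib sum_distrib_left algebra_simps)
    finally have S1': "(\<Sum>m\<in>M. \<Sum>t\<in>block K m. max (g t (yt (blk K t))) 0)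
       \<le> P * (\<Sum>m\<in>M. \<Delta> m) + real (card M) * q1 + real (card M) * q2 + real (card M) * q3" .
    have t0: "P * (\<Sum>m\<in>M. \<Delta> m) \<le> P * (4 * R\<^sup>2)" using tele[OF z0K] P0 unfolding \<Delta>_def by (intro mult_left_mono) auto
    have t1: "real (card M) * q1 \<le> real NB * q1" using cardM q10 by (intro mult_right_mono) auto
    have t2: "real (card M) * q2 \<le> real T * (Gg\<^sup>2 / (2 * c))"
    proof -
      have "real (card M) * q2 = (real (card M) * real K) * (Gg\<^sup>2 / (2 * c))" unfolding q2_def by simp
      also have "\<dots> \<le> real T * (Gg\<^sup>2 / (2 * c))" using cardMK cpos by (intro mult_right_mono) auto
      finally show ?thesis .
    qed
    have t3: "real (card M) * q3 \<le> real T * (2 * c * R * Gf / \<alpha>)"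
    proof -
      have "real (card M) * q3 = (real (card M) * real K) * (2 * c * R * Gf / \<alpha>)" unfolding q3_def by simp
      also have "\<dots> \<le> real T * (2 * c * R * Gf / \<alpha>)" using cardMK cpos Rpos Gf0 apos by (intro mult_right_mono) auto
      finally show ?thesis .
    qed
    have S2: "(\<Sum>t\<in>B. max (g t (yt (blk K t))) 0) \<le> real (2 * K) * (Gg * (2 * R))"
    proof -
      have "(\<Sum>t\<in>B. max (g t (yt (blk K t))) 0) \<le> real (card B) * (Gg * (2 * R))"
      proof (rule sum_bounded_above)
        fix t assume "t \<in> B"
        then have t: "t \<in> {s..e}" unfolding B_def by auto
        have "max (g t (yt (blk K t))) 0 - max (g t z0) 0 \<le> Gg * norm (yt (blk K t) - z0)"
          using glip[OF ytb[OF t] z0R] .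
        also have "\<dots> \<le> Gg * (2 * R)" using dist2R[OF ytb[OF t] z0R] Gg0 by (intro mult_left_mono) auto
        finally show "max (g t (yt (blk K t))) 0 \<le> Gg * (2 * R)" using z0g t by simp
      qed
      also have "\<dots> \<le> real (2 * K) * (Gg * (2 * R))"
        using cardB Gg0 Rpos by (intro mult_right_mono) auto
      finally show ?thesis .
    qed
    have fin1: "P * (4 * R\<^sup>2) = 2 * \<alpha> * R\<^sup>2 / \<delta> + 2 * c * R * (R * K)"
      unfolding P_def using dpos by (simp add: field_simps power2_eq_square)
    have fin2: "real NB * q1 \<le> (Gf / \<alpha> + 4 * R) * (Gf * T / (2 * \<delta> * K))"
    proof -
      have "(Gf / \<alpha> + 4 * R) * (Gf * T / (2 * \<delta> * K)) = (Gf / \<alpha> + 4 * R) * (Gf * NB / (2 * \<delta>))"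
        using TK Kr by (simp add: field_simps)
      also have "\<dots> = Gf\<^sup>2 * NB / (2 * \<alpha> * \<delta>) + real NB * q1"
        unfolding q1_def using apos dpos by (simp add: field_simps power2_eq_square)
      finally show ?thesis using apos dpos by simp
    qed
    have fin3: "real T * (2 * c * R * Gf / \<alpha>) = 2 * c * R * (Gf * T / \<alpha>)" by simp
    have fin4: "real (2 * K) * (Gg * (2 * R)) = 4 * K * R * Gg" by simp
    have fin5: "real T * (Gg\<^sup>2 / (2 * c)) = Gg\<^sup>2 / (2 * c) * T" by simp
    have "2 * c * R * (Gf * T / \<alpha> + R * K) = 2 * c * R * (Gf * T / \<alpha>) + 2 * c * R * (R * K)"
      by (simp add: distrib_left)
    note fin6 = this
    have X: "(\<Sum>t=s..e. max (g t (yt (blk K t))) 0) \<le> P * (4 * R\<^sup>2) + real NB * q1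
       + real T * (Gg\<^sup>2 / (2 * c)) + real T * (2 * c * R * Gf / \<alpha>) + real (2 * K) * (Gg * (2 * R))"
      using eq S1' t0 t1 t2 t3 S2 by linarith
    show ?thesis unfolding fin6 using X fin2 unfolding fin1 fin3 fin4 fin5 by linarith
  qed
  show ?thesis using C1 C2 by blast
qed

end
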